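(* For any cardinals $\lambda\ge\kappa\ge\omega$ and any natural number $d$, we have $\chi_{\rm CF}(\lambda,\kappa,d)\le\omega$, and in fact $[\lambda,\kappa,d]\Rightarrow\omega$.
   Context: For a function $f$ and set $A$, $I_f(A)=\{\xi\in\operatorname{ran}(f):|A\cap f^{-1}\{\xi\}|=1\}$. A $(\lambda,\kappa,\mu)$-system is a family $\mathcal A$ with $|\mathcal A|=\lambda$, $|A|=\kappa$ for all $A\in\mathcal A$, and $|A\cap A'|<\mu$ for distinct $A,A'\in\mathcal A$. A conflict free coloring of $\mathcal A$ with $\rho$ colors is $f:\bigcup\mathcal A\to\rho$ with $I_f(A)\neq\emptyset$ for all $A\in\mathcal A$; $\chi_{\rm CF}(\mathcal A)$ is the least such $\rho$, and $\chi_{\rm CF}(\lambda,\kappa,\mu)$ is its supremum over all $(\lambda,\kappa,\mu)$-systems. For $\lambda\ge\kappa\ge\rho\ge\omega$ and $\mu\le\kappa$, $[\lambda,\kappa,\mu]\Rightarrow\rho$ means: every $(\lambda,\kappa,\mu)$-system $\mathcal A$ admits $f:\bigcup\mathcal A\to\rho$ with $|\rho\setminus I_f(A)|<\rho$ for all $A\in\mathcal A$. *)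

theory Defs
  imports "HOL-Library.Equipollence"
begin

definition I_f :: "('a \<Rightarrow> 'b) \<Rightarrow> 'a set \<Rightarrow> 'a set \<Rightarrow> 'b set" where
  "I_f f D A = {\<xi> \<in> f ` D. card (A \<inter> f -` {\<xi>}) = 1}"

text \<open>A (lambda,kappa,d)-system with d a natural number; the cardinals lambda and
  kappa are given as the cardinalities of the sets L and K.\<close>
definition is_system :: "'a set set \<Rightarrow> 'l set \<Rightarrow> 'k set \<Rightarrow> nat \<Rightarrow> bool" where
  "is_system \<A> L K d \<longleftrightarrow>
     \<A> \<approx> L \<and> (\<forall>A\<in>\<A>. A \<approx> K) \<and>
     (\<forall>A\<in>\<A>. \<forall>A'\<in>\<A>. A \<noteq> A' \<longrightarrow> finite (A \<inter> A') \<and> card (A \<inter> A') < d)"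

definition conflict_free :: "('a \<Rightarrow> 'b) \<Rightarrow> 'a set set \<Rightarrow> bool" where
  "conflict_free f \<A> \<longleftrightarrow> (\<forall>A\<in>\<A>. I_f f (\<Union>\<A>) A \<noteq> {})"

end

theory Submission
  imports Defs "HOL-Library.Countable_Set_Type"
begin
unbundle cardinal_syntax

lemma lists_len_bound:
  assumes "infinite Y"
  shows "|{xs. set xs \<subseteq> Y \<and> length xs = n}| \<le>o |Y|"
proof (induction n)
  case 0
  have "{xs. set xs \<subseteq> Y \<and> length xs = 0} = {[]}" by auto
  moreover have "Y \<noteq> {}" using assms by auto
  ultimately show ?case by (simp add: card_of_singl_ordLeq)
next
  case (Suc n)
  have "{xs. set xs \<subseteq> Y \<and> length xs = Suc n} \<subseteq> (\<Union>y\<in>Y. (Cons y) ` {xs. set xs \<subseteq> Y \<and> length xs = n})"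
    by (auto simp: length_Suc_conv)
  moreover have "|\<Union>y\<in>Y. (Cons y) ` {xs. set xs \<subseteq> Y \<and> length xs = n}| \<le>o |Y|"
  proof (rule card_of_UNION_ordLeq_infinite[OF assms])
    show "|Y| \<le>o |Y|" by (rule ordLeq_refl) (rule card_of_Card_order)
    show "\<forall>i\<in>Y. |(#) i ` {xs. set xs \<subseteq> Y \<and> length xs = n}| \<le>o |Y|"
      using ordLeq_transitive[OF card_of_image Suc] by blast
  qed
  ultimately show ?case using card_of_mono1 ordLeq_transitive by blast
qed


lemma fin_subsets_bound:
  assumes "infinite Y"
  shows "|{F. F \<subseteq> Y \<and> finite F}| \<le>o |Y|"
proof -
  have "{F. F \<subseteq> Y \<and> finite F} \<subseteq> set ` (\<Union>n. {xs. set xs \<subseteq> Y \<and> length xs = n})"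
  proof
    fix F assume "F \<in> {F. F \<subseteq> Y \<and> finite F}"
    then obtain xs where "set xs = F" "F \<subseteq> Y" using finite_list by auto
    then show "F \<in> set ` (\<Union>n. {xs. set xs \<subseteq> Y \<and> length xs = n})" by auto
  qed
  moreover have "|\<Union>n. {xs. set xs \<subseteq> Y \<and> length xs = n}| \<le>o |Y|"
  proof (rule card_of_UNION_ordLeq_infinite[OF assms])
    show "|UNIV :: nat set| \<le>o |Y|" using assms infinite_iff_card_of_nat by blast
    show "\<forall>i\<in>UNIV. |{xs. set xs \<subseteq> Y \<and> length xs = i}| \<le>o |Y|"
      using lists_len_bound[OF assms] by blast
  qed
  ultimately show ?thesis
    by (meson card_of_image card_of_mono1 ordLeq_transitive)
qed

lemma finite_ordLeq_infinite:
  assumes "finite A" "infinite M" shows "|A| \<le>o |M|"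
  using assms card_of_ordLeq_infinite ordLess_imp_ordLeq ordLess_or_ordLeq card_of_Well_order
  by metis

lemma fin_subsets_bound_le:
  assumes "infinite M" "|Y| \<le>o |M|"
  shows "|{F. F \<subseteq> Y \<and> finite F}| \<le>o |M|"
proof (cases "finite Y")
  case True
  then have "finite {F. F \<subseteq> Y \<and> finite F}" by simp
  then show ?thesis using assms finite_ordLeq_infinite by blast
next
  case False
  then show ?thesis using fin_subsets_bound assms ordLeq_transitive by blast
qed


definition big :: "nat \<Rightarrow> 'a set \<Rightarrow> 'a set \<Rightarrow> bool" where
  "big d A S \<longleftrightarrow> (\<exists>F. F \<subseteq> A \<inter> S \<and> finite F \<and> card F = d)"

definition dad :: "nat \<Rightarrow> 'a set set \<Rightarrow> bool" where
  "dad d \<A> \<longleftrightarrow> (\<forall>A\<in>\<A>. \<forall>A'\<in>\<A>. A \<noteq> A' \<longrightarrow> finite (A \<inter> A') \<and> card (A \<inter> A') < d)"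

definition good :: "'a set set \<Rightarrow> bool" where
  "good \<A> \<longleftrightarrow> (\<exists>D. (\<forall>A\<in>\<A>. D A \<subseteq> A \<and> infinite (D A)) \<and>
      (\<forall>A\<in>\<A>. finite (A \<inter> \<Union>(D ` (\<A> - {A})))))"

lemma not_big_iff: "\<not> big d A S \<longleftrightarrow> finite (A \<inter> S) \<and> card (A \<inter> S) < d"
proof
  assume nb: "\<not> big d A S"
  show "finite (A \<inter> S) \<and> card (A \<inter> S) < d"
  proof (rule ccontr)
    assume "\<not> (finite (A \<inter> S) \<and> card (A \<inter> S) < d)"
    then consider "infinite (A \<inter> S)" | "finite (A \<inter> S)" "d \<le> card (A \<inter> S)" by linarith
    then show False
    proof cases
      case 1
      then obtain F where "F \<subseteq> A \<inter> S" "finite F" "card F = d"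
        using infinite_arbitrarily_large by blast
      then show False using nb unfolding big_def by blast
    next
      case 2
      then obtain F where "F \<subseteq> A \<inter> S" "finite F" "card F = d"
        using obtain_subset_with_card_n[of d "A \<inter> S"] by blast
      then show False using nb unfolding big_def by blast
    qed
  qed
next
  assume "finite (A \<inter> S) \<and> card (A \<inter> S) < d"
  then show "\<not> big d A S" unfolding big_def
    using card_mono leD by blast
qed

lemma big_mono: "big d A S \<Longrightarrow> S \<subseteq> S' \<Longrightarrow> big d A S'"
  unfolding big_def by blast

lemma dad_not_big: "dad d \<A> \<Longrightarrow> A \<in> \<A> \<Longrightarrow> A' \<in> \<A> \<Longrightarrow> A \<noteq> A' \<Longrightarrow> \<not> big d A A'"
  unfolding dad_def using not_big_iff by blast

lemma dad_finite_Int: "dad d \<A> \<Longrightarrow> A \<in> \<A> \<Longrightarrow> A' \<in> \<A> \<Longrightarrow> A \<noteq> A' \<Longrightarrow> finite (A \<inter> A')"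
  unfolding dad_def by blast

lemma big_count:
  assumes "dad d \<A>"
  shows "|{A\<in>\<A>. big d A Y}| \<le>o |{F. F \<subseteq> Y \<and> finite F}|"
proof -
  define g where "g A = (SOME F. F \<subseteq> A \<inter> Y \<and> finite F \<and> card F = d)" for A
  have g: "g A \<subseteq> A \<inter> Y \<and> finite (g A) \<and> card (g A) = d" if "big d A Y" for A
    using that unfolding g_def big_def by (rule someI_ex)
  have "inj_on g {A\<in>\<A>. big d A Y}"
  proof (rule inj_onI)
    fix A A' assume "A \<in> {A\<in>\<A>. big d A Y}" "A' \<in> {A\<in>\<A>. big d A Y}" "g A = g A'"
    then have "A \<in> \<A>" "A' \<in> \<A>" "g A \<subseteq> A \<inter> A'" "finite (g A)" "card (g A) = d"
      using g[of A] g[of A'] by auto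
    then have "big d A A'" unfolding big_def by blast
    then show "A = A'" using dad_not_big assms \<open>A \<in> \<A>\<close> \<open>A' \<in> \<A>\<close> by blast
  qed
  moreover have "g ` {A\<in>\<A>. big d A Y} \<subseteq> {F. F \<subseteq> Y \<and> finite F}" using g by blast
  ultimately show ?thesis using card_of_ordLeq by blast
qed

lemma chain_finite:
  assumes nb: "\<forall>C\<in>\<C>. \<not> big d A C" and ch: "\<forall>C\<in>\<C>. \<forall>C'\<in>\<C>. C \<subseteq> C' \<or> C' \<subseteq> C"
  shows "finite (A \<inter> \<Union>\<C>)"
proof (rule ccontr)
  assume inf: "infinite (A \<inter> \<Union>\<C>)"
  then have ne: "\<C> \<noteq> {}" by auto
  obtain F where F: "F \<subseteq> A \<inter> \<Union>\<C>" "finite F" "card F = d"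
    using infinite_arbitrarily_large[OF inf] by blast
  have "subset.chain UNIV \<C>" using ch unfolding subset.chain_def by blast
  then obtain C where "C \<in> \<C>" "F \<subseteq> C"
    using finite_subset_Union_chain[of F \<C> UNIV] F ne by blast
  then have "big d A C" using F unfolding big_def by blast
  then show False using nb \<open>C \<in> \<C>\<close> by blast
qed

lemma infinite_diff_finite_eqpoll:
  assumes "infinite A" "finite F" shows "A - F \<approx> A"
  using assms(2,1)
proof (induction F rule: finite_induct)
  case empty then show ?case by simp
next
  case (insert x F)
  have inf: "infinite (A - insert x F)" using insert by auto
  show ?case
  proof (cases "x \<in> A - F")
    case True
    then have "A - F = insert x (A - insert x F)" by auto
    then have "A - insert x F \<approx> A - F"
      using infinite_insert_eqpoll[OF inf, of x] eqpoll_sym by metis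
    then show ?thesis using insert eqpoll_trans by blast
  next
    case False
    then have "A - insert x F = A - F" by auto
    then show ?thesis using insert by simp
  qed
qed


lemma good_coloring:
  assumes "good \<A>"
  shows "\<exists>f::'a \<Rightarrow> nat. \<forall>A\<in>\<A>. finite (UNIV - I_f f (\<Union>\<A>) A)"
proof -
  obtain D where D1: "\<And>A. A\<in>\<A> \<Longrightarrow> D A \<subseteq> A \<and> infinite (D A)"
    and D2: "\<And>A. A\<in>\<A> \<Longrightarrow> finite (A \<inter> \<Union>(D ` (\<A> - {A})))"
    using assms unfolding good_def by blast
  define E where "E A = D A - \<Union>(D ` (\<A> - {A}))" for A
  have Einf: "infinite (E A)" if "A \<in> \<A>" for A
  proof
    assume "finite (E A)"
    moreover have "D A \<subseteq> E A \<union> (A \<inter> \<Union>(D ` (\<A> - {A})))"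
      using D1[OF that] unfolding E_def by blast
    ultimately show False using D1[OF that] D2[OF that] finite_subset by blast
  qed
  have Edisj: "E A \<inter> E A' = {}" if "A \<in> \<A>" "A' \<in> \<A>" "A \<noteq> A'" for A A'
    using that unfolding E_def by blast
  define g where "g A = (SOME g::nat \<Rightarrow> 'a. inj g \<and> range g \<subseteq> E A)" for A
  have g: "inj (g A) \<and> range (g A) \<subseteq> E A" if "A \<in> \<A>" for A
    unfolding g_def using infinite_countable_subset[OF Einf[OF that]] by (rule someI_ex)
  define Y where "Y = (\<Union>A\<in>\<A>. range (g A))"
  define f where "f x = (if x \<in> Y then Suc (SOME n. \<exists>A\<in>\<A>. x = g A n) else 0)" for x
  have uniq: "A = A' \<and> n = n'" if "A \<in> \<A>" "A' \<in> \<A>" "g A n = g A' n'" for A A' n n'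
  proof -
    have "g A n \<in> E A" "g A' n' \<in> E A'" using g that(1,2) by blast+
    then have "A = A'" using Edisj that by fastforce
    moreover then have "n = n'" using g[OF that(1)] that(3) injD by metis
    ultimately show ?thesis by blast
  qed
  have fg: "f (g A n) = Suc n" if "A \<in> \<A>" for A n
  proof -
    have inY: "g A n \<in> Y" unfolding Y_def using that by blast
    have ex: "\<exists>n'. \<exists>A'\<in>\<A>. g A n = g A' n'" using that by blast
    obtain A' where "A' \<in> \<A>" "g A n = g A' (SOME n'. \<exists>A'\<in>\<A>. g A n = g A' n')"
      using someI_ex[OF ex] by blast
    then have "(SOME n'. \<exists>A'\<in>\<A>. g A n = g A' n') = n" using uniq that by metis
    then show ?thesis unfolding f_def using inY by simp
  qed
  have fback: "\<exists>A'\<in>\<A>. y = g A' n" if "f y = Suc n" for y n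
  proof -
    have yY: "y \<in> Y" using that unfolding f_def by (auto split: if_splits)
    then have ex: "\<exists>n. \<exists>A\<in>\<A>. y = g A n" unfolding Y_def by blast
    have "Suc (SOME n. \<exists>A\<in>\<A>. y = g A n) = Suc n" using that yY unfolding f_def by simp
    then show ?thesis using someI_ex[OF ex] by simp
  qed
  have "finite (UNIV - I_f f (\<Union>\<A>) A)" if A: "A \<in> \<A>" for A
  proof -
    let ?B = "A \<inter> \<Union>(D ` (\<A> - {A}))"
    have "UNIV - I_f f (\<Union>\<A>) A \<subseteq> insert 0 (f ` ?B)"
    proof
      fix c assume c: "c \<in> UNIV - I_f f (\<Union>\<A>) A"
      show "c \<in> insert 0 (f ` ?B)"
      proof (rule ccontr)
        assume nc: "c \<notin> insert 0 (f ` ?B)"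
        then obtain n where cn: "c = Suc n" by (cases c) auto
        have gA: "g A n \<in> A" using g[OF A] D1[OF A] unfolding E_def by blast
        have "A \<inter> f -` {c} = {g A n}"
        proof
          show "{g A n} \<subseteq> A \<inter> f -` {c}" using gA fg[OF A] cn by simp
          show "A \<inter> f -` {c} \<subseteq> {g A n}"
          proof
            fix y assume y: "y \<in> A \<inter> f -` {c}"
            then obtain A' where A': "A' \<in> \<A>" "y = g A' n" using fback cn by auto
            show "y \<in> {g A n}"
            proof (cases "A' = A")
              case True then show ?thesis using A' by simp
            next
              case False
              have "y \<in> E A'" using g[OF A'(1)] A'(2) by blast
              then have "y \<in> D A'" unfolding E_def by blast
              then have "y \<in> ?B" using y A' False by blast
              then have "c \<in> f ` ?B" using y by auto
              then show ?thesis using nc by blast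
            qed
          qed
        qed
        then have "c \<in> I_f f (\<Union>\<A>) A"
          unfolding I_f_def using gA A fg[OF A] cn by force
        then show False using c by blast
      qed
    qed
    moreover have "finite (insert 0 (f ` ?B))" using D2[OF A] by simp
    ultimately show ?thesis using finite_subset by blast
  qed
  then show ?thesis by blast
qed


lemma wo_facts:
  assumes "Well_order r"
  shows "trans r" "antisym r" "total_on (Field r) r" "wf (r - Id)" "Refl r"
  using assms unfolding well_order_on_def linear_order_on_def partial_order_on_def preorder_on_def
  by auto

lemma card_order_facts:
  "Well_order |X|" "Field |X| = X"
  by (rule card_of_Well_order, rule Field_card_of)

lemma base_countable:
  assumes cnt: "|\<A>| \<le>o |UNIV :: nat set|" and inf: "\<forall>A\<in>\<A>. infinite A" and dad: "dad d \<A>"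
  shows "good \<A>"
proof -
  let ?s = "|\<A>|"
  have W: "Well_order ?s" and F: "Field ?s = \<A>" by (rule card_order_facts)+
  have fin_under: "finite (underS ?s A)" if "A \<in> \<A>" for A
  proof -
    have "A \<in> Field ?s" using that F by simp
    then have "|underS ?s A| <o ?s" by (rule card_of_underS[OF card_of_Card_order])
    also have "?s \<le>o natLeq" by (rule ordLeq_transitive[OF cnt ordIso_imp_ordLeq[OF card_of_nat]])
    finally show ?thesis using finite_iff_ordLess_natLeq by blast
  qed
  have usub: "underS ?s A \<subseteq> \<A> - {A}" for A
  proof
    fix x assume x: "x \<in> underS ?s A"
    then have "x \<in> Field ?s" by (rule underS_Field)
    then show "x \<in> \<A> - {A}" using x F underS_notIn by fastforce
  qed
  define D where "D A = A - \<Union>(underS ?s A)" for A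
  have finI: "finite (A \<inter> \<Union>(underS ?s A))" if "A \<in> \<A>" for A
  proof -
    have "A \<inter> \<Union>(underS ?s A) = (\<Union>A'\<in>underS ?s A. A \<inter> A')" by blast
    moreover have "finite (\<Union>A'\<in>underS ?s A. A \<inter> A')"
    proof (rule finite_UN_I[OF fin_under[OF that]])
      fix A' assume "A' \<in> underS ?s A"
      then show "finite (A \<inter> A')" using usub dad_finite_Int[OF dad that] by blast
    qed
    ultimately show ?thesis by simp
  qed
  have "\<forall>A\<in>\<A>. D A \<subseteq> A \<and> infinite (D A)"
  proof
    fix A assume A: "A \<in> \<A>"
    have "A \<subseteq> D A \<union> (A \<inter> \<Union>(underS ?s A))" unfolding D_def by blast
    then have "infinite (D A)" using finI[OF A] inf A finite_subset by blast
    then show "D A \<subseteq> A \<and> infinite (D A)" unfolding D_def by blast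
  qed
  moreover have "\<forall>A\<in>\<A>. finite (A \<inter> \<Union>(D ` (\<A> - {A})))"
  proof
    fix A assume A: "A \<in> \<A>"
    have "A \<inter> \<Union>(D ` (\<A> - {A})) \<subseteq> A \<inter> \<Union>(underS ?s A)"
    proof
      fix x assume x: "x \<in> A \<inter> \<Union>(D ` (\<A> - {A}))"
      then obtain A' where A': "A' \<in> \<A>" "A' \<noteq> A" "x \<in> D A'" by blast
      have "(A', A) \<in> ?s \<or> (A, A') \<in> ?s" using wo_facts(3)[OF W] A A' F
        unfolding total_on_def by blast
      then show "x \<in> A \<inter> \<Union>(underS ?s A)"
      proof
        assume "(A', A) \<in> ?s"
        then have "A' \<in> underS ?s A" using A' unfolding underS_def by blast
        then show ?thesis using x A' unfolding D_def by blast
      next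
        assume "(A, A') \<in> ?s"
        then have "A \<in> underS ?s A'" using A' unfolding underS_def by blast
        then have "x \<notin> A" using A' unfolding D_def by blast
        then show ?thesis using x by blast
      qed
    qed
    then show "finite (A \<inter> \<Union>(D ` (\<A> - {A})))" using finI[OF A] finite_subset by blast
  qed
  ultimately show ?thesis unfolding good_def by blast
qed

lemma uncountable_nat_less:
  assumes "uncountable K" shows "|UNIV :: nat set| <o |K|"
  using assms countable_card_of_nat ordLess_or_ordLeq card_of_Well_order by metis

lemma countable_less_uncountable:
  assumes "uncountable K" "countable B" shows "|B| <o |K|"
  using assms(2) countable_card_of_nat ordLeq_ordLess_trans uncountable_nat_less[OF assms(1)] by blast

lemma strict_UN_countable:
  assumes K: "uncountable K" and I: "|I| <o |K|" and c: "\<forall>i\<in>I. countable (f i)"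
  shows "|\<Union>i\<in>I. f i| <o |K|"
proof (cases "finite I")
  case True
  then have "countable (\<Union>i\<in>I. f i)" using c by (simp add: countable_finite)
  then show ?thesis using countable_less_uncountable[OF K] by blast
next
  case False
  have "|\<Union>i\<in>I. f i| \<le>o |I|"
  proof (rule card_of_UNION_ordLeq_infinite[OF False])
    show "|I| \<le>o |I|" by (rule ordLeq_refl) (rule card_of_Card_order)
    have "|UNIV :: nat set| \<le>o |I|" using False infinite_iff_card_of_nat by blast
    then show "\<forall>i\<in>I. |f i| \<le>o |I|"
      using c countable_card_of_nat ordLeq_transitive by blast
  qed
  then show ?thesis using I ordLeq_ordLess_trans by blast
qed

lemma strict_fin_subsets:
  assumes K: "uncountable K" and Y: "|Y| <o |K|"
  shows "|{F. F \<subseteq> Y \<and> finite F}| <o |K|"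
proof (cases "finite Y")
  case True
  then have "finite {F. F \<subseteq> Y \<and> finite F}" by simp
  then show ?thesis using countable_less_uncountable[OF K] countable_finite by blast
next
  case False
  then show ?thesis using fin_subsets_bound Y ordLeq_ordLess_trans by blast
qed

lemma diff_small_infinite:
  assumes A: "A \<approx> K" and K: "infinite K" and B: "|B| <o |K|"
  shows "infinite (A - B)"
proof
  assume fin: "finite (A - B)"
  have "|A - B| <o |K|"
    using fin K finite_ordLeq_infinite ordLess_or_ordLeq card_of_Well_order
    by (metis card_of_ordLeq_finite)
  then have "|B \<union> (A - B)| <o |K|" using card_of_Un_ordLess_infinite[OF K B] by blast
  moreover have "A \<subseteq> B \<union> (A - B)" by blast
  ultimately have "|A| <o |K|" using card_of_mono1 ordLeq_ordLess_trans by blast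
  moreover have "|K| \<le>o |A|" using A eqpoll_iff_card_of_ordIso ordIso_iff_ordLeq by blast
  ultimately show False using not_ordLess_ordLeq by blast
qed


lemma base_uncountable:
  fixes \<A> :: "'a set set"
  assumes K: "uncountable K" and size: "|\<A>| \<le>o |K|" and eq: "\<forall>A\<in>\<A>. A \<approx> K"
    and dad: "dad d \<A>"
  shows "good \<A>"
proof -
  let ?s = "|\<A>|"
  let ?R = "?s - Id"
  have W: "Well_order ?s" and F: "Field ?s = \<A>" by (rule card_order_facts)+
  have wfR: "wf ?R" using wo_facts(4)[OF W] .
  have Kinf: "infinite K" using K countable_finite by blast
  define H where "H f A = (SOME D. D \<subseteq> A - \<Union>{A'\<in>\<A>. A' \<noteq> A \<and> big d A' (\<Union>(f ` underS ?s A))}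
       \<and> countable D \<and> infinite D)" for f :: "'a set \<Rightarrow> 'a set" and A
  define Dr where "Dr = wfrec ?R H"
  define Y where "Y A = \<Union>(Dr ` underS ?s A)" for A
  define Q where "Q A = {A'\<in>\<A>. A' \<noteq> A \<and> big d A' (Y A)}" for A
  have Dr_eq: "Dr A = (SOME D. D \<subseteq> A - \<Union>(Q A) \<and> countable D \<and> infinite D)" for A
  proof -
    have "Dr A = H (cut Dr ?R A) A" unfolding Dr_def by (rule wfrec[OF wfR])
    moreover have "cut Dr ?R A ` underS ?s A = Dr ` underS ?s A"
      by (rule image_cong) (auto simp: cut_apply underS_def)
    ultimately show ?thesis unfolding H_def Q_def Y_def by simp
  qed
  have underS_sub: "underS ?s A \<subseteq> \<A> - {A}" for A
  proof
    fix x assume x: "x \<in> underS ?s A"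
    then have "x \<in> Field ?s" by (rule underS_Field)
    then show "x \<in> \<A> - {A}" using x F underS_notIn by fastforce
  qed
  have spec: "A \<in> \<A> \<longrightarrow> Dr A \<subseteq> A - \<Union>(Q A) \<and> countable (Dr A) \<and> infinite (Dr A)" for A
  proof (induction A rule: wf_induct_rule[OF wfR])
    case (1 A)
    show ?case
    proof
      assume A: "A \<in> \<A>"
      have IH: "countable (Dr y)" if "y \<in> underS ?s A" for y
        using 1 that underS_sub unfolding underS_def by blast
      have "A \<in> Field ?s" using A F by simp
      then have "|underS ?s A| <o ?s" by (rule card_of_underS[OF card_of_Card_order])
      then have us: "|underS ?s A| <o |K|" using size ordLess_ordLeq_trans by blast
      have YK: "|Y A| <o |K|" unfolding Y_def
        by (rule strict_UN_countable[OF K us]) (use IH in blast)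
      have "|Q A| \<le>o |{F. F \<subseteq> Y A \<and> finite F}|"
        unfolding Q_def using big_count[OF dad, of "Y A"] card_of_mono1 ordLeq_transitive
        by (metis (no_types, lifting) mem_Collect_eq subsetI)
      then have QK: "|Q A| <o |K|" using strict_fin_subsets[OF K YK] ordLeq_ordLess_trans by blast
      have "A \<inter> \<Union>(Q A) = (\<Union>A'\<in>Q A. A \<inter> A')" by blast
      moreover have "|\<Union>A'\<in>Q A. A \<inter> A'| <o |K|"
      proof (rule strict_UN_countable[OF K QK])
        show "\<forall>i\<in>Q A. countable (A \<inter> i)"
          using dad_finite_Int[OF dad A] countable_finite unfolding Q_def by blast
      qed
      ultimately have "|A \<inter> \<Union>(Q A)| <o |K|" by simp
      then have "infinite (A - (A \<inter> \<Union>(Q A)))"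
        using diff_small_infinite[OF _ Kinf] eq A by blast
      moreover have "A - (A \<inter> \<Union>(Q A)) = A - \<Union>(Q A)" by blast
      ultimately have inf: "infinite (A - \<Union>(Q A))" by simp
      obtain g :: "nat \<Rightarrow> 'a" where g: "inj g" "range g \<subseteq> A - \<Union>(Q A)"
        using infinite_countable_subset[OF inf] by blast
      have ex: "\<exists>D. D \<subseteq> A - \<Union>(Q A) \<and> countable D \<and> infinite D"
        using g range_inj_infinite by blast
      show "Dr A \<subseteq> A - \<Union>(Q A) \<and> countable (Dr A) \<and> infinite (Dr A)"
        unfolding Dr_eq by (rule someI_ex[OF ex])
    qed
  qed
  have trans: "trans ?s" and anti: "antisym ?s" and tot: "total_on \<A> ?s" and refl: "Refl ?s"
    using wo_facts[OF W] F by auto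
  define Yp where "Yp g = \<Union>(Dr ` under ?s g)" for g
  have Dr_Yp: "Dr g \<subseteq> Yp g" if "g \<in> \<A>" for g
    using refl that F unfolding Yp_def under_def refl_on_def by blast
  have Yp_mono: "Yp g \<subseteq> Yp g'" if "(g, g') \<in> ?s" for g g'
    using trans that unfolding Yp_def under_def trans_def by blast
  have Yp_chain: "\<forall>C\<in>Yp ` S. \<forall>C'\<in>Yp ` S. C \<subseteq> C' \<or> C' \<subseteq> C" if SA: "S \<subseteq> \<A>" for S
  proof (intro ballI)
    fix C C' assume "C \<in> Yp ` S" "C' \<in> Yp ` S"
    then obtain g g' where "g \<in> \<A>" "g' \<in> \<A>" "C = Yp g" "C' = Yp g'" using SA by blast
    then show "C \<subseteq> C' \<or> C' \<subseteq> C"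
      using tot Yp_mono unfolding total_on_def by (cases "g = g'") blast+
  qed
  have "finite (A \<inter> \<Union>(Dr ` (\<A> - {A})))" if A: "A \<in> \<A>" for A
  proof -
    define G where "G = {g\<in>\<A>. big d A (Yp g)}"
    show ?thesis
    proof (cases "G = {}")
      case True
      have "finite (A \<inter> \<Union>(Yp ` \<A>))"
      proof (rule chain_finite[where d=d])
        show "\<forall>C\<in>Yp ` \<A>. \<not> big d A C" using True unfolding G_def by blast
        show "\<forall>C\<in>Yp ` \<A>. \<forall>C'\<in>Yp ` \<A>. C \<subseteq> C' \<or> C' \<subseteq> C" using Yp_chain[of \<A>] by blast
      qed
      moreover have "A \<inter> \<Union>(Dr ` (\<A> - {A})) \<subseteq> A \<inter> \<Union>(Yp ` \<A>)" using Dr_Yp by blast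
      ultimately show ?thesis using finite_subset by blast
    next
      case False
      then obtain g0 where g0G: "g0 \<in> G" and gmin: "\<And>y. (y, g0) \<in> ?R \<Longrightarrow> y \<notin> G"
        using wfE_min[OF wfR] by (metis ex_in_conv)
      have g0: "g0 \<in> \<A>" using g0G G_def by blast
      define Z where "Z = A \<inter> \<Union>(Yp ` underS ?s g0)"
      have Zfin: "finite Z" unfolding Z_def
      proof (rule chain_finite[where d=d])
        show "\<forall>C\<in>Yp ` underS ?s g0. \<not> big d A C"
        proof
          fix C assume "C \<in> Yp ` underS ?s g0"
          then obtain y where y: "y \<in> underS ?s g0" "C = Yp y" by blast
          then have "(y, g0) \<in> ?R" unfolding underS_def by blast
          then have "y \<notin> G" by (rule gmin)
          then show "\<not> big d A C" using y underS_sub unfolding G_def by blast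
        qed
        show "\<forall>C\<in>Yp ` underS ?s g0. \<forall>C'\<in>Yp ` underS ?s g0. C \<subseteq> C' \<or> C' \<subseteq> C"
          using Yp_chain underS_sub by blast
      qed
      define Wf where "Wf = (if g0 = A then {} else A \<inter> g0)"
      have Wfin: "finite Wf" unfolding Wf_def using dad_finite_Int[OF dad A g0] by auto
      have "A \<inter> \<Union>(Dr ` (\<A> - {A})) \<subseteq> Z \<union> Wf"
      proof
        fix x assume "x \<in> A \<inter> \<Union>(Dr ` (\<A> - {A}))"
        then obtain A' where x: "x \<in> A" "x \<in> Dr A'" and A': "A' \<in> \<A>" "A' \<noteq> A" by blast
        have spA': "Dr A' \<subseteq> A' - \<Union>(Q A')" using spec A' by blast
        consider "A' = g0" | "(A', g0) \<in> ?s" "A' \<noteq> g0" | "(g0, A') \<in> ?s" "A' \<noteq> g0"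
          using tot A' g0 unfolding total_on_def by blast
        then show "x \<in> Z \<union> Wf"
        proof cases
          case 1
          then show ?thesis using x spA' A' unfolding Wf_def by auto
        next
          case 2
          then have "A' \<in> underS ?s g0" unfolding underS_def by blast
          then show ?thesis using x Dr_Yp[OF A'(1)] unfolding Z_def by blast
        next
          case 3
          have "under ?s g0 \<subseteq> underS ?s A'"
          proof
            fix z assume "z \<in> under ?s g0"
            then have z: "(z, g0) \<in> ?s" unfolding under_def by blast
            then have "(z, A') \<in> ?s" using 3 trans unfolding trans_def by blast
            moreover have "z \<noteq> A'" using z 3 anti unfolding antisym_def by blast
            ultimately show "z \<in> underS ?s A'" unfolding underS_def by blast
          qed
          then have "Yp g0 \<subseteq> Y A'" unfolding Yp_def Y_def by blast
          moreover have "big d A (Yp g0)" using g0G G_def by blast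
          ultimately have "big d A (Y A')" using big_mono by blast
          then have "A \<in> Q A'" unfolding Q_def using A A' by blast
          then show ?thesis using x spA' by blast
        qed
      qed
      then show ?thesis using Zfin Wfin finite_subset by blast
    qed
  qed
  moreover have "\<forall>A\<in>\<A>. Dr A \<subseteq> A \<and> infinite (Dr A)" using spec by blast
  ultimately show ?thesis unfolding good_def by blast
qed

definition clstep :: "nat \<Rightarrow> 'a set set \<Rightarrow> 'a set \<Rightarrow> 'a set" where
  "clstep d \<A> T = T \<union> \<Union>{A\<in>\<A>. big d A T}"

definition cl :: "nat \<Rightarrow> 'a set set \<Rightarrow> 'a set \<Rightarrow> 'a set" where
  "cl d \<A> S = (\<Union>n. (clstep d \<A> ^^ n) S)"

lemma clstep_incr: "T \<subseteq> clstep d \<A> T"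
  unfolding clstep_def by blast

lemma clstep_mono: "T \<subseteq> T' \<Longrightarrow> clstep d \<A> T \<subseteq> clstep d \<A> T'"
  unfolding clstep_def using big_mono by blast

lemma iter_mono_n: "m \<le> n \<Longrightarrow> (clstep d \<A> ^^ m) S \<subseteq> (clstep d \<A> ^^ n) S"
proof (induction n)
  case 0 then show ?case by simp
next
  case (Suc n)
  show ?case
  proof (cases "m = Suc n")
    case True then show ?thesis by simp
  next
    case False
    then have "(clstep d \<A> ^^ m) S \<subseteq> (clstep d \<A> ^^ n) S" using Suc by simp
    also have "\<dots> \<subseteq> (clstep d \<A> ^^ Suc n) S" using clstep_incr by simp
    finally show ?thesis .
  qed
qed

lemma iter_mono_S: "S \<subseteq> S' \<Longrightarrow> (clstep d \<A> ^^ n) S \<subseteq> (clstep d \<A> ^^ n) S'"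
  by (induction n) (simp_all add: clstep_mono)

lemma cl_sub: "S \<subseteq> cl d \<A> S"
proof -
  have "(clstep d \<A> ^^ 0) S \<subseteq> (\<Union>n. (clstep d \<A> ^^ n) S)" by (rule UN_upper) simp
  then show ?thesis unfolding cl_def by simp
qed

lemma cl_mono: "S \<subseteq> S' \<Longrightarrow> cl d \<A> S \<subseteq> cl d \<A> S'"
  unfolding cl_def by (rule UN_mono) (simp_all add: iter_mono_S)

lemma cl_closed:
  assumes "A \<in> \<A>" "big d A (cl d \<A> S)"
  shows "A \<subseteq> cl d \<A> S"
proof -
  obtain F where F: "F \<subseteq> A \<inter> cl d \<A> S" "finite F" "card F = d"
    using assms(2) unfolding big_def by blast
  have ch: "subset.chain UNIV (range (\<lambda>n. (clstep d \<A> ^^ n) S))"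
  proof -
    have "\<forall>X\<in>range (\<lambda>n. (clstep d \<A> ^^ n) S). \<forall>Y\<in>range (\<lambda>n. (clstep d \<A> ^^ n) S). X \<subseteq> Y \<or> Y \<subseteq> X"
    proof (intro ballI)
      fix X Y assume "X \<in> range (\<lambda>n. (clstep d \<A> ^^ n) S)" "Y \<in> range (\<lambda>n. (clstep d \<A> ^^ n) S)"
      then obtain m n where "X = (clstep d \<A> ^^ m) S" "Y = (clstep d \<A> ^^ n) S" by blast
      then show "X \<subseteq> Y \<or> Y \<subseteq> X" using iter_mono_n nat_le_linear by metis
    qed
    then show ?thesis unfolding subset.chain_def by blast
  qed
  obtain B where B: "B \<in> range (\<lambda>n. (clstep d \<A> ^^ n) S)" "F \<subseteq> B"
    using finite_subset_Union_chain[OF F(2) _ _ ch] F(1) unfolding cl_def by blast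
  then obtain n where "F \<subseteq> (clstep d \<A> ^^ n) S" by blast
  then have "big d A ((clstep d \<A> ^^ n) S)" using F unfolding big_def by blast
  then have "A \<subseteq> (clstep d \<A> ^^ Suc n) S" using assms(1) unfolding clstep_def by auto
  then show ?thesis unfolding cl_def by blast
qed

lemma cl_bound:
  assumes M: "infinite M" and S: "|S| \<le>o |M|" and KM: "|K| \<le>o |M|"
    and eq: "\<forall>A\<in>\<A>. A \<approx> K" and dad: "dad d \<A>"
  shows "|cl d \<A> S| \<le>o |M|"
proof -
  have step: "|(clstep d \<A> ^^ n) S| \<le>o |M|" for n
  proof (induction n)
    case 0 then show ?case using S by simp
  next
    case (Suc n)
    let ?T = "(clstep d \<A> ^^ n) S"
    have B: "|{A\<in>\<A>. big d A ?T}| \<le>o |M|"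
      using big_count[OF dad] fin_subsets_bound_le[OF M Suc] ordLeq_transitive by blast
    have "|\<Union>A\<in>{A\<in>\<A>. big d A ?T}. A| \<le>o |M|"
    proof (rule card_of_UNION_ordLeq_infinite[OF M B])
      show "\<forall>A\<in>{A \<in> \<A>. big d A ?T}. |A| \<le>o |M|"
        using eq KM eqpoll_iff_card_of_ordIso ordIso_ordLeq_trans by blast
    qed
    then have U: "|\<Union>{A\<in>\<A>. big d A ?T}| \<le>o |M|" by simp
    have "clstep d \<A> ?T = (\<Union>b\<in>(UNIV::bool set). if b then ?T else \<Union>{A\<in>\<A>. big d A ?T})"
      unfolding clstep_def by (auto split: if_splits)
    also have "|\<dots>| \<le>o |M|"
    proof (rule card_of_UNION_ordLeq_infinite[OF M])
      show "|UNIV :: bool set| \<le>o |M|" by (rule finite_ordLeq_infinite[OF _ M]) simp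
      show "\<forall>b\<in>UNIV. |if b then ?T else \<Union>{A\<in>\<A>. big d A ?T}| \<le>o |M|"
        using Suc U by simp
    qed
    finally show ?case by simp
  qed
  show ?thesis unfolding cl_def
  proof (rule card_of_UNION_ordLeq_infinite[OF M])
    show "|UNIV :: nat set| \<le>o |M|" using M infinite_iff_card_of_nat by blast
    show "\<forall>n\<in>UNIV. |(clstep d \<A> ^^ n) S| \<le>o |M|" using step by blast
  qed
qed

lemma wo_max:
  assumes W: "Well_order r" and fin: "finite F" and ne: "F \<noteq> {}" and sub: "F \<subseteq> Field r"
  shows "\<exists>z\<in>F. \<forall>y\<in>F. (y, z) \<in> r"
  using fin ne sub
proof (induction F rule: finite_ne_induct)
  case (singleton x)
  then show ?case using wo_facts(5)[OF W] unfolding refl_on_def by blast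
next
  case (insert x F)
  then obtain z where z: "z \<in> F" "\<forall>y\<in>F. (y, z) \<in> r" by blast
  have xz: "x \<in> Field r" "z \<in> Field r" using insert z by blast+
  have tot: "total_on (Field r) r" and tr: "trans r" and rf: "Refl r" using wo_facts[OF W] by blast+
  show ?case
  proof (cases "(x, z) \<in> r")
    case True then show ?thesis using z by blast
  next
    case False
    have "x \<noteq> z" using False rf xz unfolding refl_on_def by blast
    then have "(z, x) \<in> r" using tot xz False unfolding total_on_def by blast
    then have "\<forall>y\<in>insert x F. (y, x) \<in> r"
      using z tr rf xz unfolding trans_def refl_on_def by blast
    then show ?thesis by blast
  qed
qed


lemma step:
  fixes X :: "'a set" and K :: "'k set" and \<A> :: "'a set set"
  assumes KX: "|K| <o |X|" and Kinf: "infinite K"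
    and IH: "\<And>(X'::'a set) (\<A>'::'a set set). |X'| <o |X| \<Longrightarrow> \<Union>\<A>' \<subseteq> X' \<Longrightarrow> \<forall>A\<in>\<A>'. A \<approx> K \<Longrightarrow> dad d \<A>' \<Longrightarrow> good \<A>'"
    and sub: "\<Union>\<A> \<subseteq> X" and eq: "\<forall>A\<in>\<A>. A \<approx> K" and dad: "dad d \<A>"
  shows "good \<A>"
proof -
  let ?r = "|X|"
  let ?R = "?r - Id"
  have W: "Well_order ?r" and F: "Field ?r = X" by (rule card_order_facts)+
  have wfR: "wf ?R" using wo_facts(4)[OF W] .
  have trans: "trans ?r" and anti: "antisym ?r" and tot: "total_on X ?r" and refl: "Refl ?r"
    using wo_facts[OF W] F by auto
  have Xinf: "infinite X" using Kinf KX card_of_ordLeq_infinite ordLess_imp_ordLeq by blast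
  define T where "T x = cl d \<A> (under ?r x)" for x
  define U where "U x = \<Union>(T ` underS ?r x)" for x
  have T_mono: "T x \<subseteq> T z" if "(x, z) \<in> ?r" for x z
    unfolding T_def using that trans by (intro cl_mono) (auto simp: under_def trans_def)
  have x_in_T: "x \<in> T x" if "x \<in> X" for x
    using that refl F cl_sub[of "under ?r x" d \<A>] unfolding T_def under_def refl_on_def by blast
  have T_small: "|T x| <o |X|" if x: "x \<in> X" for x
  proof -
    have "x \<in> Field ?r" using x F by simp
    then have us: "|underS ?r x| <o |X|" by (rule card_of_underS[OF card_of_Card_order])
    have "|{x}| <o |X|" using finite_ordLess_infinite[OF card_of_Well_order card_of_Well_order, of "{x}" X] Xinf
      by (simp add: Field_card_of)
    then have "|underS ?r x \<union> {x}| <o |X|" using card_of_Un_ordLess_infinite[OF Xinf us] by blast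
    moreover have "under ?r x = underS ?r x \<union> {x}"
      using Refl_under_underS[OF refl] x F by simp
    ultimately have un: "|under ?r x| <o |X|" by simp
    show ?thesis
    proof (cases "|K| \<le>o |under ?r x|")
      case True
      have "infinite (under ?r x)" using True Kinf card_of_ordLeq_infinite by blast
      then have "|T x| \<le>o |under ?r x|" unfolding T_def
        by (rule cl_bound[OF _ _ True eq dad]) (rule ordLeq_refl, rule card_of_Card_order)
      then show ?thesis using un ordLeq_ordLess_trans by blast
    next
      case False
      then have "|under ?r x| <o |K|" using ordLess_or_ordLeq[OF card_of_Well_order card_of_Well_order] by blast
      then have "|under ?r x| \<le>o |K|" by (rule ordLess_imp_ordLeq)
      then have "|T x| \<le>o |K|" unfolding T_def
        by (rule cl_bound[OF Kinf _ _ eq dad]) (rule ordLeq_refl, rule card_of_Card_order)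
      then show ?thesis using KX ordLeq_ordLess_trans by blast
    qed
  qed
  have Ainf: "infinite A" if "A \<in> \<A>" for A
    using eq that Kinf eqpoll_finite_iff by blast
  have lev_ex: "\<exists>x\<in>X. A \<subseteq> T x" if A: "A \<in> \<A>" for A
  proof -
    have Ai: "infinite A" by (rule Ainf[OF A])
    obtain F0 where F0: "F0 \<subseteq> A" "finite F0" "card F0 = d"
      using infinite_arbitrarily_large[OF Ai] by blast
    obtain a where a: "a \<in> A" using Ai by (metis ex_in_conv infinite_imp_nonempty)
    have AX: "A \<subseteq> X" using A sub by blast
    have iX: "insert a F0 \<subseteq> Field ?r" using F0(1) a AX F by blast
    have fi: "finite (insert a F0)" using F0(2) by simp
    obtain z where z: "z \<in> insert a F0" "\<forall>y\<in>insert a F0. (y, z) \<in> ?r"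
      using wo_max[OF W fi _ iX] by blast
    have zX: "z \<in> X" using z(1) iX F by blast
    have "F0 \<subseteq> under ?r z" using z(2) unfolding under_def by blast
    moreover have "under ?r z \<subseteq> T z" unfolding T_def by (rule cl_sub)
    ultimately have "F0 \<subseteq> A \<inter> T z" using F0(1) by blast
    then have "big d A (T z)" using F0(2,3) unfolding big_def by blast
    then have "A \<subseteq> T z" unfolding T_def by (rule cl_closed[OF A])
    then show ?thesis using zX by blast
  qed
  define lev where "lev A = (SOME x. x \<in> X \<and> A \<subseteq> T x \<and> (\<forall>y. (y, x) \<in> ?R \<longrightarrow> \<not> A \<subseteq> T y))" for A
  have lev: "lev A \<in> X \<and> A \<subseteq> T (lev A) \<and> (\<forall>y. (y, lev A) \<in> ?R \<longrightarrow> \<not> A \<subseteq> T y)"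
    if A: "A \<in> \<A>" for A
  proof -
    obtain x0 where "x0 \<in> {x\<in>X. A \<subseteq> T x}" using lev_ex[OF A] by blast
    then obtain x where x1: "x \<in> {x\<in>X. A \<subseteq> T x}" and x2: "\<And>y. (y, x) \<in> ?R \<Longrightarrow> y \<notin> {x\<in>X. A \<subseteq> T x}"
      by (rule wfE_min[OF wfR]) blast
    have yX: "y \<in> X" if "(y, x) \<in> ?R" for y
    proof -
      have "(y, x) \<in> ?r" using that by blast
      then have "y \<in> Field ?r" by (rule FieldI1)
      then show ?thesis using F by simp
    qed
    have "\<forall>y. (y, x) \<in> ?R \<longrightarrow> \<not> A \<subseteq> T y"
    proof (intro allI impI)
      fix y assume y: "(y, x) \<in> ?R"
      show "\<not> A \<subseteq> T y" using x2[OF y] yX[OF y] by blast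
    qed
    then have ex: "\<exists>x. x \<in> X \<and> A \<subseteq> T x \<and> (\<forall>y. (y, x) \<in> ?R \<longrightarrow> \<not> A \<subseteq> T y)"
      using x1 by blast
    show ?thesis unfolding lev_def by (rule someI_ex[OF ex])
  qed
  have AU_fin: "finite (A \<inter> U (lev A))" if A: "A \<in> \<A>" for A
    unfolding U_def
  proof (rule chain_finite[where d=d])
    show "\<forall>C\<in>T ` underS ?r (lev A). \<not> big d A C"
    proof
      fix C assume "C \<in> T ` underS ?r (lev A)"
      then obtain y where y: "y \<in> underS ?r (lev A)" "C = T y" by blast
      then have "(y, lev A) \<in> ?R" unfolding underS_def by blast
      then have nA: "\<not> A \<subseteq> T y" using lev[OF A] by blast
      show "\<not> big d A C"
      proof
        assume "big d A C"
        then have "big d A (cl d \<A> (under ?r y))" using y(2) unfolding T_def by simp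
        then have "A \<subseteq> T y" unfolding T_def by (rule cl_closed[OF A])
        then show False using nA by contradiction
      qed
    qed
    show "\<forall>C\<in>T ` underS ?r (lev A). \<forall>C'\<in>T ` underS ?r (lev A). C \<subseteq> C' \<or> C' \<subseteq> C"
    proof (intro ballI)
      fix C C' assume "C \<in> T ` underS ?r (lev A)" "C' \<in> T ` underS ?r (lev A)"
      then obtain y y' where yy: "y \<in> underS ?r (lev A)" "y' \<in> underS ?r (lev A)" "C = T y" "C' = T y'"
        by blast
      have "y \<in> Field ?r" using yy(1) by (rule underS_Field)
      moreover have "y' \<in> Field ?r" using yy(2) by (rule underS_Field)
      ultimately
      have yX: "y \<in> X" "y' \<in> X" using F by simp_all
      show "C \<subseteq> C' \<or> C' \<subseteq> C"
      proof (cases "y = y'")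
        case True then show ?thesis using yy by simp
      next
        case False
        then have "(y, y') \<in> ?r \<or> (y', y) \<in> ?r" using tot yX unfolding total_on_def by blast
        then show ?thesis using T_mono yy(3,4) by blast
      qed
    qed
  qed
  define P where "P A = A - U (lev A)" for A
  define Ax where "Ax x = P ` {A\<in>\<A>. lev A = x}" for x
  have P_inf: "infinite (P A)" and P_eq: "P A \<approx> K" if A: "A \<in> \<A>" for A
  proof -
    have "P A = A - (A \<inter> U (lev A))" unfolding P_def by blast
    then have "P A \<approx> A" using infinite_diff_finite_eqpoll[OF Ainf[OF A] AU_fin[OF A]] by simp
    then show "P A \<approx> K" using eq A eqpoll_trans by blast
    then show "infinite (P A)" using Kinf eqpoll_finite_iff by blast
  qed
  have P_inj: "A = A'" if "A \<in> \<A>" "A' \<in> \<A>" "lev A = lev A'" "P A = P A'" for A A'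
  proof (rule ccontr)
    assume "A \<noteq> A'"
    then have "finite (A \<inter> A')" using dad_finite_Int[OF dad that(1,2)] by blast
    moreover have "P A \<subseteq> A \<inter> A'" using that(4) unfolding P_def by blast
    ultimately show False using P_inf[OF that(1)] finite_subset by blast
  qed
  have good_x: "good (Ax x)" if x: "x \<in> X" for x
  proof (rule IH[OF T_small[OF x]])
    show "\<Union>(Ax x) \<subseteq> T x" unfolding Ax_def P_def using lev by blast
    show "\<forall>A\<in>Ax x. A \<approx> K" unfolding Ax_def using P_eq by blast
    show "dad d (Ax x)" unfolding dad_def
    proof (intro ballI impI)
      fix B B' assume "B \<in> Ax x" "B' \<in> Ax x" "B \<noteq> B'"
      then obtain A A' where AA: "A \<in> \<A>" "A' \<in> \<A>" "B = P A" "B' = P A'" "A \<noteq> A'"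
        unfolding Ax_def by blast
      then have "finite (A \<inter> A') \<and> card (A \<inter> A') < d" using dad unfolding dad_def by blast
      moreover have "B \<inter> B' \<subseteq> A \<inter> A'" using AA unfolding P_def by blast
      ultimately show "finite (B \<inter> B') \<and> card (B \<inter> B') < d"
        using card_mono[of "A \<inter> A'" "B \<inter> B'"] finite_subset[of "B \<inter> B'" "A \<inter> A'"] by linarith
    qed
  qed
  define GP where "GP x Dx \<longleftrightarrow> (\<forall>B\<in>Ax x. Dx B \<subseteq> B \<and> infinite (Dx B)) \<and>
      (\<forall>B\<in>Ax x. finite (B \<inter> \<Union>(Dx ` (Ax x - {B}))))" for x and Dx :: "'a set \<Rightarrow> 'a set"
  have "\<forall>x\<in>X. \<exists>Dx. GP x Dx"
  proof
    fix x assume "x \<in> X"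
    then have "good (Ax x)" by (rule good_x)
    then show "\<exists>Dx. GP x Dx" unfolding good_def GP_def .
  qed
  from bchoice[OF this] obtain Df where Dfall: "\<forall>x\<in>X. GP x (Df x)" by blast
  have Df: "(\<forall>B\<in>Ax x. Df x B \<subseteq> B \<and> infinite (Df x B)) \<and>
      (\<forall>B\<in>Ax x. finite (B \<inter> \<Union>(Df x ` (Ax x - {B}))))" if "x \<in> X" for x
    using Dfall that unfolding GP_def by blast
  define D where "D A = Df (lev A) (P A)" for A
  have PAx: "P A \<in> Ax (lev A)" if "A \<in> \<A>" for A unfolding Ax_def using that by blast
  have D1: "D A \<subseteq> P A \<and> infinite (D A)" if A: "A \<in> \<A>" for A
    unfolding D_def using Df[OF conjunct1[OF lev[OF A]]] PAx[OF A] by blast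
  have "finite (A \<inter> \<Union>(D ` (\<A> - {A})))" if A: "A \<in> \<A>" for A
  proof -
    let ?x = "lev A"
    have xX: "?x \<in> X" using lev[OF A] by blast
    have "A \<inter> \<Union>(D ` (\<A> - {A})) \<subseteq> (A \<inter> U ?x) \<union> (P A \<inter> \<Union>(Df ?x ` (Ax ?x - {P A})))"
    proof
      fix y assume "y \<in> A \<inter> \<Union>(D ` (\<A> - {A}))"
      then obtain A' where y: "y \<in> A" "y \<in> D A'" and A': "A' \<in> \<A>" "A' \<noteq> A" by blast
      let ?x' = "lev A'"
      have x'X: "?x' \<in> X" using lev[OF A'(1)] by blast
      consider "?x' = ?x" | "(?x', ?x) \<in> ?r" "?x' \<noteq> ?x" | "(?x, ?x') \<in> ?r" "?x' \<noteq> ?x"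
        using tot xX x'X unfolding total_on_def by blast
      then show "y \<in> (A \<inter> U ?x) \<union> (P A \<inter> \<Union>(Df ?x ` (Ax ?x - {P A})))"
      proof cases
        case 1
        have "P A' \<noteq> P A" using P_inj[OF A'(1) A 1] A'(2) by blast
        moreover have "P A' \<in> Ax ?x" using PAx[OF A'(1)] 1 by simp
        ultimately have "y \<in> \<Union>(Df ?x ` (Ax ?x - {P A}))" using y(2) 1 unfolding D_def by force
        then show ?thesis using y(1) unfolding P_def by blast
      next
        case 2
        then have "?x' \<in> underS ?r ?x" unfolding underS_def by blast
        then have "T ?x' \<subseteq> U ?x" unfolding U_def by blast
        moreover have "y \<in> T ?x'" using y(2) D1[OF A'(1)] lev[OF A'(1)] unfolding P_def by blast
        ultimately show ?thesis using y(1) by blast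
      next
        case 3
        then have "?x \<in> underS ?r ?x'" unfolding underS_def by auto
        then have "T ?x \<subseteq> U ?x'" unfolding U_def by blast
        then have "y \<in> U ?x'" using y(1) lev[OF A] by blast
        moreover have "y \<notin> U ?x'" using y(2) D1[OF A'(1)] unfolding P_def by blast
        ultimately show ?thesis by blast
      qed
    qed
    moreover have "finite (P A \<inter> \<Union>(Df ?x ` (Ax ?x - {P A})))"
      using Df[OF xX] PAx[OF A] by blast
    ultimately show ?thesis using AU_fin[OF A] finite_subset by blast
  qed
  moreover have "\<forall>A\<in>\<A>. D A \<subseteq> A \<and> infinite (D A)" using D1 unfolding P_def by blast
  ultimately show ?thesis unfolding good_def by blast
qed

lemma main_good:
  fixes K :: "'k set" and X :: "'a set"
  assumes Kinf: "infinite K"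
  shows "\<Union>\<A> \<subseteq> X \<Longrightarrow> \<forall>A\<in>\<A>. A \<approx> K \<Longrightarrow> dad d \<A> \<Longrightarrow> good (\<A>::'a set set)"
proof (induction X arbitrary: \<A> rule: wf_induct_rule[OF wf_inv_image[OF wf_ordLess, of card_of]])
  case (1 X \<A>)
  show ?case
  proof (cases "|K| <o |X|")
    case True
    show ?thesis
    proof (rule step[OF True Kinf _ "1.prems"])
      fix X' :: "'a set" and \<A>' :: "'a set set"
      assume "|X'| <o |X|" "\<Union>\<A>' \<subseteq> X'" "\<forall>A\<in>\<A>'. A \<approx> K" "dad d \<A>'"
      then show "good \<A>'" using "1.IH"[of X' \<A>'] by simp
    qed
  next
    case False
    then have XK: "|X| \<le>o |K|" using ordLess_or_ordLeq[OF card_of_Well_order card_of_Well_order] by blast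
    have Ainf: "infinite A" if "A \<in> \<A>" for A
      using "1.prems"(2) that Kinf eqpoll_finite_iff by blast
    have "\<A> = {A\<in>\<A>. big d A X}"
    proof -
      have "big d A X" if A: "A \<in> \<A>" for A
      proof -
        obtain F where "F \<subseteq> A" "finite F" "card F = d"
          using infinite_arbitrarily_large[OF Ainf[OF A]] by blast
        moreover have "A \<subseteq> X" using A "1.prems"(1) by blast
        ultimately show ?thesis unfolding big_def by blast
      qed
      then show ?thesis by blast
    qed
    then have "|\<A>| \<le>o |{F. F \<subseteq> X \<and> finite F}|" using big_count[OF "1.prems"(3), of X] by simp
    then have AK: "|\<A>| \<le>o |K|" using fin_subsets_bound_le[OF Kinf XK] ordLeq_transitive by blast
    show ?thesis
    proof (cases "countable K")
      case True
      then have "|\<A>| \<le>o |UNIV :: nat set|" using AK countable_card_of_nat ordLeq_transitive by blast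
      then show ?thesis using base_countable Ainf "1.prems"(3) by blast
    next
      case False
      then show ?thesis using base_uncountable[OF _ AK "1.prems"(2,3)] by blast
    qed
  qed
qed

theorem theorem4p1:
  fixes \<A> :: "'a set set" and L :: "'l set" and K :: "'k set" and d :: nat
  assumes "infinite K" and "K \<lesssim> L" and "is_system \<A> L K d"
  shows "(\<exists>f :: 'a \<Rightarrow> nat. conflict_free f \<A>) \<and>
         (\<exists>f :: 'a \<Rightarrow> nat. \<forall>A\<in>\<A>. finite (UNIV - I_f f (\<Union>\<A>) A))"
proof -
  have eq: "\<forall>A\<in>\<A>. A \<approx> K" and dad: "dad d \<A>"
    using assms(3) unfolding is_system_def dad_def by blast+
  have "good \<A>" using main_good[OF assms(1) _ eq dad] by blast
  then obtain f :: "'a \<Rightarrow> nat" where f: "\<forall>A\<in>\<A>. finite (UNIV - I_f f (\<Union>\<A>) A)"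
    using good_coloring by blast
  have "conflict_free f \<A>" unfolding conflict_free_def
  proof
    fix A assume "A \<in> \<A>"
    then have "finite (UNIV - I_f f (\<Union>\<A>) A)" using f by blast
    then show "I_f f (\<Union>\<A>) A \<noteq> {}" using infinite_UNIV_nat by auto
  qed
  then show ?thesis using f by blast
qed

end
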